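(* Let $X=\bigcup_{\alpha\in\Lambda}X_\alpha$, where each $X_\alpha$ is a closed locally Menger subspace of $X$ and the family $\{X_\alpha:\alpha\in\Lambda\}$ is locally finite in $X$. Then $X$ is locally Menger.
   Context: A space $X$ is Menger if for each sequence $(\mathcal{U}_n)$ of open covers of $X$ there is a sequence $(\mathcal{V}_n)$ with each $\mathcal{V}_n$ a finite subset of $\mathcal{U}_n$ and $\bigcup_{n}\bigcup\mathcal{V}_n=X$. A space $X$ is locally Menger if for each $x\in X$ there exist an open set $U$ and a Menger subspace $Y$ of $X$ with $x\in U\subseteq Y$. *)

theory Defs
  imports "HOL-Analysis.Analysis"
begin

definition Menger_space :: "'a topology \<Rightarrow> bool" where
  "Menger_space X \<longleftrightarrow>
     (\<forall>\<U> :: nat \<Rightarrow> 'a set set.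
        (\<forall>n. (\<forall>U \<in> \<U> n. openin X U) \<and> topspace X \<subseteq> \<Union>(\<U> n)) \<longrightarrow>
        (\<exists>\<V> :: nat \<Rightarrow> 'a set set.
           (\<forall>n. finite (\<V> n) \<and> \<V> n \<subseteq> \<U> n) \<and>
           topspace X \<subseteq> (\<Union>n. \<Union>(\<V> n))))"

definition locally_Menger :: "'a topology \<Rightarrow> bool" where
  "locally_Menger X \<longleftrightarrow>
     (\<forall>x \<in> topspace X. \<exists>U Y. openin X U \<and> x \<in> U \<and> U \<subseteq> Y \<and>
        Y \<subseteq> topspace X \<and> Menger_space (subtopology X Y))"

end

theory Submission
  imports Defs
begin

lemma Menger_union:
  assumes MA: "Menger_space (subtopology X A)" and MB: "Menger_space (subtopology X B)"
  shows "Menger_space (subtopology X (A \<union> B))"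
  unfolding Menger_space_def
proof (intro allI impI)
  fix \<U> :: "nat \<Rightarrow> 'a set set"
  assume H: "\<forall>n. (\<forall>U\<in>\<U> n. openin (subtopology X (A \<union> B)) U) \<and> topspace (subtopology X (A \<union> B)) \<subseteq> \<Union>(\<U> n)"
  have side: "\<exists>W. (\<forall>n. finite (W n) \<and> W n \<subseteq> \<U> n) \<and> topspace X \<inter> C \<subseteq> (\<Union>m. \<Union>(W m))"
    if MC: "Menger_space (subtopology X C)" and CAB: "C \<subseteq> A \<union> B" for C
  proof -
    define \<U>C where "\<U>C n = (\<lambda>U. U \<inter> C) ` \<U> n" for n
    have "\<forall>n. (\<forall>U\<in>\<U>C n. openin (subtopology X C) U) \<and> topspace (subtopology X C) \<subseteq> \<Union>(\<U>C n)"
    proof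
      fix n
      have o: "openin (subtopology X C) (U \<inter> C)" if "U \<in> \<U> n" for U
      proof -
        from H that obtain T where "openin X T" "U = T \<inter> (A \<union> B)"
          by (meson openin_subtopology)
        then have "U \<inter> C = T \<inter> C" using CAB by blast
        then show ?thesis using \<open>openin X T\<close> openin_subtopology by blast
      qed
      have "topspace (subtopology X C) \<subseteq> \<Union>(\<U>C n)"
      proof
        fix y assume "y \<in> topspace (subtopology X C)"
        then have y: "y \<in> topspace X" "y \<in> C" by auto
        then have "y \<in> topspace (subtopology X (A \<union> B))" using CAB by auto
        then obtain U where "U \<in> \<U> n" "y \<in> U" using H by blast
        then show "y \<in> \<Union>(\<U>C n)" using y unfolding \<U>C_def by blast
      qed
      then show "(\<forall>U\<in>\<U>C n. openin (subtopology X C) U) \<and> topspace (subtopology X C) \<subseteq> \<Union>(\<U>C n)"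
        using o unfolding \<U>C_def by blast
    qed
    then have "\<exists>\<V>. (\<forall>n. finite (\<V> n) \<and> \<V> n \<subseteq> \<U>C n) \<and>
        topspace (subtopology X C) \<subseteq> (\<Union>n. \<Union>(\<V> n))"
      by (rule mp[OF MC[unfolded Menger_space_def, THEN spec[of _ \<U>C]]])
    then obtain \<V> where V: "\<forall>n. finite (\<V> n) \<and> \<V> n \<subseteq> \<U>C n"
      and Vc: "topspace (subtopology X C) \<subseteq> (\<Union>n. \<Union>(\<V> n))"
      by blast
    have "\<forall>n. \<exists>W. W \<subseteq> \<U> n \<and> finite W \<and> \<V> n = (\<lambda>U. U \<inter> C) ` W"
      using V unfolding \<U>C_def by (meson finite_subset_image)
    then have "\<exists>W. \<forall>n. W n \<subseteq> \<U> n \<and> finite (W n) \<and> \<V> n = (\<lambda>U. U \<inter> C) ` W n"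
      by (rule choice)
    then obtain W where W0: "\<forall>n. W n \<subseteq> \<U> n \<and> finite (W n) \<and> \<V> n = (\<lambda>U. U \<inter> C) ` W n"
      by blast
    then have W: "\<And>n. W n \<subseteq> \<U> n \<and> finite (W n) \<and> \<V> n = (\<lambda>U. U \<inter> C) ` W n"
      by blast
    have "topspace X \<inter> C \<subseteq> (\<Union>m. \<Union>(W m))"
    proof
      fix y assume "y \<in> topspace X \<inter> C"
      then have "y \<in> topspace (subtopology X C)" by (simp only: topspace_subtopology)
      then have "y \<in> (\<Union>n. \<Union>(\<V> n))" by (rule subsetD[OF Vc])
      then obtain n V where nV: "V \<in> \<V> n" "y \<in> V" by (elim UN_E UnionE)
      have "\<V> n = (\<lambda>U. U \<inter> C) ` W n" using W by blast
      then have "V \<in> (\<lambda>U. U \<inter> C) ` W n" using nV(1) by simp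
      then obtain U where "U \<in> W n" "V = U \<inter> C" by blast
      then show "y \<in> (\<Union>m. \<Union>(W m))" using nV(2) by blast
    qed
    moreover have "\<forall>n. finite (W n) \<and> W n \<subseteq> \<U> n" using W by blast
    ultimately show ?thesis by (intro exI[of _ W] conjI)
  qed
  obtain WA where WA: "\<forall>n. finite (WA n) \<and> WA n \<subseteq> \<U> n" "topspace X \<inter> A \<subseteq> (\<Union>m. \<Union>(WA m))"
    using side[OF MA Un_upper1] by (elim exE conjE)
  obtain WB where WB: "\<forall>n. finite (WB n) \<and> WB n \<subseteq> \<U> n" "topspace X \<inter> B \<subseteq> (\<Union>m. \<Union>(WB m))"
    using side[OF MB Un_upper2] by (elim exE conjE)
  show "\<exists>\<V>. (\<forall>n. finite (\<V> n) \<and> \<V> n \<subseteq> \<U> n) \<and> topspace (subtopology X (A \<union> B)) \<subseteq> (\<Union>n. \<Union>(\<V> n))"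
  proof (intro exI[of _ "\<lambda>n. WA n \<union> WB n"] conjI allI)
    fix n show "finite (WA n \<union> WB n)" "WA n \<union> WB n \<subseteq> \<U> n" using WA WB by auto
  next
    show "topspace (subtopology X (A \<union> B)) \<subseteq> (\<Union>n. \<Union>(WA n \<union> WB n))"
    proof
      fix y assume "y \<in> topspace (subtopology X (A \<union> B))"
      then have "y \<in> topspace X \<inter> A \<or> y \<in> topspace X \<inter> B" by auto
      then show "y \<in> (\<Union>n. \<Union>(WA n \<union> WB n))"
      proof
        assume "y \<in> topspace X \<inter> A"
        then have "y \<in> (\<Union>m. \<Union>(WA m))" by (rule subsetD[OF WA(2)])
        then show ?thesis by blast
      next
        assume "y \<in> topspace X \<inter> B"
        then have "y \<in> (\<Union>m. \<Union>(WB m))" by (rule subsetD[OF WB(2)])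
        then show ?thesis by blast
      qed
    qed
  qed
qed

lemma Menger_empty: "Menger_space (subtopology X {})"
  unfolding Menger_space_def by (intro allI impI exI[of _ "\<lambda>n. {}"]) auto

lemma Menger_finite_Union:
  assumes "finite I" "\<And>i. i \<in> I \<Longrightarrow> Menger_space (subtopology X (Y i))"
  shows "Menger_space (subtopology X (\<Union>i\<in>I. Y i))"
  using assms
proof (induction I rule: finite_induct)
  case empty then show ?case using Menger_empty by simp
next
  case (insert i I)
  then show ?case using Menger_union[of X "Y i" "\<Union>i\<in>I. Y i"] by simp
qed

theorem theorem4p5:
  fixes X :: "'a topology" and Xs :: "'i \<Rightarrow> 'a set" and \<Lambda> :: "'i set"
  assumes cover: "topspace X = (\<Union>\<alpha>\<in>\<Lambda>. Xs \<alpha>)"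
    and closed: "\<And>\<alpha>. \<alpha> \<in> \<Lambda> \<Longrightarrow> closedin X (Xs \<alpha>)"
    and locM: "\<And>\<alpha>. \<alpha> \<in> \<Lambda> \<Longrightarrow> locally_Menger (subtopology X (Xs \<alpha>))"
    and locfin: "\<And>x. x \<in> topspace X \<Longrightarrow>
       \<exists>V. openin X V \<and> x \<in> V \<and> finite {\<alpha> \<in> \<Lambda>. Xs \<alpha> \<inter> V \<noteq> {}}"
  shows "locally_Menger X"
  unfolding locally_Menger_def
proof
  fix x assume x: "x \<in> topspace X"
  obtain V where V: "openin X V" "x \<in> V" and finF: "finite {\<alpha> \<in> \<Lambda>. Xs \<alpha> \<inter> V \<noteq> {}}"
    using locfin[OF x] by blast
  define F where "F = {\<alpha> \<in> \<Lambda>. Xs \<alpha> \<inter> V \<noteq> {}}"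
  define F1 where "F1 = {\<alpha> \<in> F. x \<in> Xs \<alpha>}"
  define F2 where "F2 = {\<alpha> \<in> F. x \<notin> Xs \<alpha>}"
  have finF': "finite F" using finF unfolding F_def .
  have fin1: "finite F1" unfolding F1_def by (rule finite_subset[OF _ finF']) blast
  have fin2: "finite F2" unfolding F2_def by (rule finite_subset[OF _ finF']) blast
  have "\<forall>\<alpha>\<in>F1. \<exists>W Y. openin X W \<and> x \<in> W \<and> W \<inter> Xs \<alpha> \<subseteq> Y \<and> Y \<subseteq> Xs \<alpha> \<and> Menger_space (subtopology X Y)"
  proof
    fix \<alpha> assume a: "\<alpha> \<in> F1"
    then have aL: "\<alpha> \<in> \<Lambda>" and xa: "x \<in> Xs \<alpha>" unfolding F1_def F_def by blast+
    have "x \<in> topspace (subtopology X (Xs \<alpha>))" unfolding topspace_subtopology using x xa by blast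
    then obtain U Y where UY: "openin (subtopology X (Xs \<alpha>)) U" "x \<in> U" "U \<subseteq> Y"
      "Y \<subseteq> topspace (subtopology X (Xs \<alpha>))" "Menger_space (subtopology (subtopology X (Xs \<alpha>)) Y)"
      using locM[OF aL] unfolding locally_Menger_def by metis
    obtain W where W: "openin X W" "U = W \<inter> Xs \<alpha>" using UY(1) openin_subtopology by metis
    have Ysub: "Y \<subseteq> Xs \<alpha>" using UY(4) unfolding topspace_subtopology by blast
    then have "Xs \<alpha> \<inter> Y = Y" by blast
    then have "Menger_space (subtopology X Y)" using UY(5) by (simp add: subtopology_subtopology)
    moreover have "x \<in> W" using W(2) UY(2) by blast
    moreover have "W \<inter> Xs \<alpha> \<subseteq> Y" using W(2) UY(3) by (simp only:)
    ultimately show "\<exists>W Y. openin X W \<and> x \<in> W \<and> W \<inter> Xs \<alpha> \<subseteq> Y \<and> Y \<subseteq> Xs \<alpha> \<and> Menger_space (subtopology X Y)"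
      using W(1) Ysub by metis
  qed
  note ch1 = bchoice[OF this]
  then obtain Wf where "\<forall>\<alpha>\<in>F1. \<exists>Y. openin X (Wf \<alpha>) \<and> x \<in> Wf \<alpha> \<and> Wf \<alpha> \<inter> Xs \<alpha> \<subseteq> Y
      \<and> Y \<subseteq> Xs \<alpha> \<and> Menger_space (subtopology X Y)"
    ..
  note ch2 = bchoice[OF this]
  then obtain Yf where WY0: "\<forall>\<alpha>\<in>F1. openin X (Wf \<alpha>) \<and> x \<in> Wf \<alpha> \<and> Wf \<alpha> \<inter> Xs \<alpha> \<subseteq> Yf \<alpha>
      \<and> Yf \<alpha> \<subseteq> Xs \<alpha> \<and> Menger_space (subtopology X (Yf \<alpha>))"
    ..
  have WY: "openin X (Wf \<alpha>) \<and> x \<in> Wf \<alpha> \<and> Wf \<alpha> \<inter> Xs \<alpha> \<subseteq> Yf \<alpha>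
      \<and> Yf \<alpha> \<subseteq> Xs \<alpha> \<and> Menger_space (subtopology X (Yf \<alpha>))"
    if "\<alpha> \<in> F1" for \<alpha> using WY0 that by (rule bspec[where x=\<alpha>])
  have WYo: "openin X (Wf \<alpha>)" and WYx: "x \<in> Wf \<alpha>" and WYs: "Wf \<alpha> \<inter> Xs \<alpha> \<subseteq> Yf \<alpha>"
    and WYy: "Yf \<alpha> \<subseteq> Xs \<alpha>" and WYm: "Menger_space (subtopology X (Yf \<alpha>))"
    if "\<alpha> \<in> F1" for \<alpha> using WY[OF that] by simp_all
  define W where "W = (V \<inter> ((\<Inter>\<alpha>\<in>F1. Wf \<alpha>) \<inter> topspace X)) - (\<Union>\<alpha>\<in>F2. Xs \<alpha>)"
  define Y where "Y = (\<Union>\<alpha>\<in>F1. Yf \<alpha>)"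
  have oI: "openin X ((\<Inter>\<alpha>\<in>F1. Wf \<alpha>) \<inter> topspace X)"
  proof (rule openin_INT[OF fin1])
    fix \<alpha> assume "\<alpha> \<in> F1" then show "openin X (Wf \<alpha>)" by (rule WYo)
  qed
  have F2L: "\<alpha> \<in> \<Lambda>" if "\<alpha> \<in> F2" for \<alpha> using that unfolding F2_def F_def by blast
  have cU: "closedin X (\<Union>\<alpha>\<in>F2. Xs \<alpha>)"
  proof (rule closedin_Union)
    show "finite (Xs ` F2)" using fin2 by (rule finite_imageI)
  next
    fix T assume "T \<in> Xs ` F2"
    then obtain \<alpha> where "\<alpha> \<in> F2" "T = Xs \<alpha>" by blast
    then show "closedin X T" using closed F2L by metis
  qed
  have oW: "openin X W" unfolding W_def
    by (rule openin_diff[OF openin_Int[OF V(1) oI] cU])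
  have xW1: "x \<in> Wf \<alpha>" if "\<alpha> \<in> F1" for \<alpha> using WYx[OF that] .
  have xW2: "x \<notin> (\<Union>\<alpha>\<in>F2. Xs \<alpha>)" unfolding F2_def by blast
  have xW: "x \<in> W" unfolding W_def using V(2) x xW1 xW2 by blast
  have WY': "W \<subseteq> Y"
  proof
    fix y assume y: "y \<in> W"
    then have "y \<in> topspace X" unfolding W_def by blast
    then obtain \<beta> where b: "\<beta> \<in> \<Lambda>" "y \<in> Xs \<beta>" using cover by blast
    then have "\<beta> \<in> F" using y unfolding W_def F_def by blast
    moreover have "\<beta> \<notin> F2" using y b unfolding W_def by blast
    ultimately have "\<beta> \<in> F1" unfolding F1_def F2_def by blast
    then have "y \<in> Yf \<beta>" using WYs[of \<beta>] y b unfolding W_def by blast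
    then show "y \<in> Y" unfolding Y_def using \<open>\<beta> \<in> F1\<close> by blast
  qed
  have Ytop: "Y \<subseteq> topspace X"
  proof -
    have "\<And>\<alpha>. \<alpha> \<in> F1 \<Longrightarrow> Xs \<alpha> \<subseteq> topspace X" using cover unfolding F1_def F_def by blast+
    then show ?thesis unfolding Y_def using WYy by blast
  qed
  have "Menger_space (subtopology X Y)" unfolding Y_def
    using Menger_finite_Union[OF fin1] WYm by metis
  then show "\<exists>U Y. openin X U \<and> x \<in> U \<and> U \<subseteq> Y \<and> Y \<subseteq> topspace X \<and> Menger_space (subtopology X Y)"
    using oW xW WY' Ytop by metis
qed

end
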